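(* There are absolute constants $c_1,c_2>0$ such that for every $n\ge2$, every $0<\rho\le1/3$ and every $0<s\le c_1/\log(1/\rho)$, there exists an $n$-agent symmetric averaging system with parameter $\rho$ whose $s$-energy satisfies $\mathcal{E}(s)\ge\bigl(c_2/(\rho s)\bigr)^{n-1}$.
   Context: A (symmetric) averaging system with parameter $\rho\in(0,1/2]$ on $n$ agents consists of an infinite sequence of undirected graphs $(g_t)_{t\ge1}$ on $\{1,\dots,n\}$, each with a self-loop at every vertex, together with positions $x_i(t)\in[0,1]$ obeying: for each $t$ and vertex $i$, with $L_i(t)=\min\{x_j(t): \{i,j\}\in g_t\}$, $R_i(t)=\max\{x_j(t): \{i,j\}\in g_t\}$ and $\delta_i(t)=\rho(R_i(t)-L_i(t))$, the new position satisfies $L_i(t)+\delta_i(t)\le x_i(t+1)\le R_i(t)-\delta_i(t)$. Its $s$-energy is $\sum_{t\ge1}\ell_t$, where $\ell_t=\sum_m\mu_m^s$ over the lengths $\mu_m$ of the maximal intervals of the union of the segments between $x_i(t)$ and $x_j(t)$ over edges $\{i,j\}\in g_t$ (with $0^s=0$). Logarithms are base 2. *)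

theory Defs
  imports "HOL-Analysis.Analysis"
begin

text \<open>Agents are 1..n. Graphs: g t i j (undirected edge at time t). Positions: x t i.
  Times t range over t >= 1.\<close>

definition Lpos :: "nat \<Rightarrow> (nat \<Rightarrow> nat \<Rightarrow> nat \<Rightarrow> bool) \<Rightarrow> (nat \<Rightarrow> nat \<Rightarrow> real) \<Rightarrow> nat \<Rightarrow> nat \<Rightarrow> real" where
  "Lpos n g x t i = Min {x t j | j. j \<in> {1..n} \<and> g t i j}"

definition Rpos :: "nat \<Rightarrow> (nat \<Rightarrow> nat \<Rightarrow> nat \<Rightarrow> bool) \<Rightarrow> (nat \<Rightarrow> nat \<Rightarrow> real) \<Rightarrow> nat \<Rightarrow> nat \<Rightarrow> real" where
  "Rpos n g x t i = Max {x t j | j. j \<in> {1..n} \<and> g t i j}"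

definition averaging_system :: "nat \<Rightarrow> real \<Rightarrow> (nat \<Rightarrow> nat \<Rightarrow> nat \<Rightarrow> bool) \<Rightarrow> (nat \<Rightarrow> nat \<Rightarrow> real) \<Rightarrow> bool" where
  "averaging_system n \<rho> g x \<longleftrightarrow>
     0 < \<rho> \<and> \<rho> \<le> 1/2 \<and>
     (\<forall>t\<ge>1.
        (\<forall>i j. g t i j \<longrightarrow> i \<in> {1..n} \<and> j \<in> {1..n}) \<and>
        (\<forall>i j. g t i j = g t j i) \<and>
        (\<forall>i\<in>{1..n}. g t i i) \<and>
        (\<forall>i\<in>{1..n}. x t i \<in> {0..1}) \<and>
        (\<forall>i\<in>{1..n}.
           Lpos n g x t i + \<rho> * (Rpos n g x t i - Lpos n g x t i) \<le> x (Suc t) i \<and>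
           x (Suc t) i \<le> Rpos n g x t i - \<rho> * (Rpos n g x t i - Lpos n g x t i)))"

definition seg_union :: "nat \<Rightarrow> (nat \<Rightarrow> nat \<Rightarrow> nat \<Rightarrow> bool) \<Rightarrow> (nat \<Rightarrow> nat \<Rightarrow> real) \<Rightarrow> nat \<Rightarrow> real set" where
  "seg_union n g x t = \<Union> {closed_segment (x t i) (x t j) | i j. i \<in> {1..n} \<and> j \<in> {1..n} \<and> g t i j}"

text \<open>ell_t: sum over maximal intervals (connected components) of the union, of length^s
  (0 powr s = 0 by convention of powr).\<close>
definition ell :: "nat \<Rightarrow> (nat \<Rightarrow> nat \<Rightarrow> nat \<Rightarrow> bool) \<Rightarrow> (nat \<Rightarrow> nat \<Rightarrow> real) \<Rightarrow> real \<Rightarrow> nat \<Rightarrow> real" where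
  "ell n g x s t = (\<Sum>C\<in>components (seg_union n g x t). (Sup C - Inf C) powr s)"

definition s_energy :: "nat \<Rightarrow> (nat \<Rightarrow> nat \<Rightarrow> nat \<Rightarrow> bool) \<Rightarrow> (nat \<Rightarrow> nat \<Rightarrow> real) \<Rightarrow> real \<Rightarrow> ennreal" where
  "s_energy n g x s = (\<Sum>t. ennreal (ell n g x s (Suc t)))"

end

theory Submission
  imports Defs
begin


type_synonym stp = "(nat \<Rightarrow> nat \<Rightarrow> bool) \<times> (nat \<Rightarrow> real)"

context
  fixes n :: nat and \<rho> :: real and s :: real
begin

definition nbr :: "(nat\<Rightarrow>real) \<Rightarrow> (nat \<Rightarrow> nat \<Rightarrow> bool) \<Rightarrow> nat \<Rightarrow> real set" where
  "nbr x G i = {x j | j. j \<in> {1..n} \<and> G i j}"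

definition vstep :: "(nat\<Rightarrow>real) \<Rightarrow> (nat \<Rightarrow> nat \<Rightarrow> bool) \<Rightarrow> (nat\<Rightarrow>real) \<Rightarrow> bool" where
  "vstep x G y \<longleftrightarrow> (\<forall>i j. G i j \<longrightarrow> i \<in> {1..n} \<and> j \<in> {1..n}) \<and> (\<forall>i j. G i j = G j i) \<and>
     (\<forall>i\<in>{1..n}. G i i) \<and> (\<forall>i\<in>{1..n}. x i \<in> {0..1}) \<and>
     (\<forall>i\<in>{1..n}. Min (nbr x G i) + \<rho> * (Max (nbr x G i) - Min (nbr x G i)) \<le> y i \<and>
        y i \<le> Max (nbr x G i) - \<rho> * (Max (nbr x G i) - Min (nbr x G i)))"

definition ellG :: "(nat \<Rightarrow> nat \<Rightarrow> bool) \<Rightarrow> (nat\<Rightarrow>real) \<Rightarrow> real" where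
  "ellG G x = (\<Sum>C\<in>components (\<Union> {closed_segment (x i) (x j) | i j. i \<in> {1..n} \<and> j \<in> {1..n} \<and> G i j}). (Sup C - Inf C) powr s)"

fun valid_run :: "(nat\<Rightarrow>real) \<Rightarrow> stp list \<Rightarrow> bool" where
  "valid_run x [] = True"
| "valid_run x ((G,y)#L) = (vstep x G y \<and> valid_run y L)"

fun final :: "(nat\<Rightarrow>real) \<Rightarrow> stp list \<Rightarrow> (nat\<Rightarrow>real)" where
  "final x [] = x"
| "final x ((G,y)#L) = final y L"

fun energy :: "(nat\<Rightarrow>real) \<Rightarrow> stp list \<Rightarrow> real" where
  "energy x [] = 0"
| "energy x ((G,y)#L) = ellG G x + energy y L"

lemma valid_run_append[simp]: "valid_run x (L1 @ L2) = (valid_run x L1 \<and> valid_run (final x L1) L2)"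
  by (induction x L1 rule: valid_run.induct) auto

lemma final_append[simp]: "final x (L1 @ L2) = final (final x L1) L2"
  by (induction x L1 rule: final.induct) auto

lemma energy_append[simp]: "energy x (L1 @ L2) = energy x L1 + energy (final x L1) L2"
  by (induction x L1 rule: energy.induct) auto

lemma ellG_nonneg: "ellG G x \<ge> 0"
  unfolding ellG_def by (intro sum_nonneg) auto

lemma ellG_lower:
  assumes "s \<ge> 0" and G: "\<forall>i j. G i j \<longrightarrow> i \<in> {1..n} \<and> j \<in> {1..n}" and a: "a \<in> {1..n}" "b \<in> {1..n}" "G a b"
  shows "ellG G x \<ge> \<bar>x a - x b\<bar> powr s"
proof -
  define S where "S = \<Union> {closed_segment (x i) (x j) | i j. i \<in> {1..n} \<and> j \<in> {1..n} \<and> G i j}"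
  have fin: "finite {closed_segment (x i) (x j) | i j. i \<in> {1..n} \<and> j \<in> {1..n} \<and> G i j}"
  proof -
    have "{closed_segment (x i) (x j) | i j. i \<in> {1..n} \<and> j \<in> {1..n} \<and> G i j}
       \<subseteq> (\<lambda>(i,j). closed_segment (x i) (x j)) ` ({1..n} \<times> {1..n})" by auto
    thus ?thesis by (rule finite_subset) auto
  qed
  have cS: "compact S" unfolding S_def
    by (rule compact_Union[OF fin]) auto
  have segS: "closed_segment (x a) (x b) \<subseteq> S" unfolding S_def using a by blast
  define C where "C = connected_component_set S (x a)"
  have xaS: "x a \<in> S" using segS by auto
  have CC: "C \<in> components S" unfolding C_def using xaS by (rule componentsI)
  have segC: "closed_segment (x a) (x b) \<subseteq> C" unfolding C_def
    by (rule connected_component_maximal) (auto simp: segS)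
  have CsubS: "C \<subseteq> S" unfolding C_def by (rule connected_component_subset)
  have bS: "bounded S" using cS compact_imp_bounded by auto
  hence bC: "bounded C" using CsubS bounded_subset by blast
  have ba: "bdd_above C" "bdd_below C" using bC bounded_imp_bdd_above bounded_imp_bdd_below by auto
  have inC: "x a \<in> C" "x b \<in> C" using segC by auto
  have "\<bar>x a - x b\<bar> \<le> Sup C - Inf C"
    using cSup_upper[OF inC(1) ba(1)] cSup_upper[OF inC(2) ba(1)]
          cInf_lower[OF inC(1) ba(2)] cInf_lower[OF inC(2) ba(2)] by linarith
  hence le1: "\<bar>x a - x b\<bar> powr s \<le> (Sup C - Inf C) powr s"
    using \<open>s \<ge> 0\<close> by (intro powr_mono2) auto
  have finc: "finite (components S)"
  proof -
    have "components S \<subseteq> (\<lambda>i. connected_component_set S (x i)) ` {1..n}"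
    proof
      fix T assume "T \<in> components S"
      then obtain y where y: "y \<in> S" "T = connected_component_set S y" by (auto elim: componentsE)
      then obtain i j where ij: "i \<in> {1..n}" "j \<in> {1..n}" "G i j" "y \<in> closed_segment (x i) (x j)"
        unfolding S_def by blast
      have "closed_segment (x i) (x j) \<subseteq> S" unfolding S_def using ij by blast
      hence "closed_segment (x i) (x j) \<subseteq> connected_component_set S (x i)"
        by (intro connected_component_maximal) auto
      hence "y \<in> connected_component_set S (x i)" using ij by auto
      hence "T = connected_component_set S (x i)" using y connected_component_eq by blast
      thus "T \<in> (\<lambda>i. connected_component_set S (x i)) ` {1..n}" using ij by auto
    qed
    thus ?thesis by (rule finite_subset) auto
  qed
  have "(Sup C - Inf C) powr s \<le> ellG G x" unfolding ellG_def S_def[symmetric]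
    by (rule member_le_sum[OF CC _ finc]) auto
  with le1 show ?thesis by linarith
qed


definition idleG :: "nat \<Rightarrow> nat \<Rightarrow> bool" where "idleG i j = (i \<in> {1..n} \<and> i = j)"

definition xsys :: "(nat\<Rightarrow>real) \<Rightarrow> stp list \<Rightarrow> nat \<Rightarrow> nat \<Rightarrow> real" where
  "xsys x0 L t = (if t - 1 < Suc (length L) then (x0 # map snd L) ! (t-1) else final x0 L)"

definition gsys :: "stp list \<Rightarrow> nat \<Rightarrow> nat \<Rightarrow> nat \<Rightarrow> bool" where
  "gsys L t = (if 1 \<le> t \<and> t \<le> length L then fst (L!(t-1)) else idleG)"

lemma vrun_nth: "valid_run x L \<Longrightarrow> i < length L \<Longrightarrow> vstep ((x # map snd L)!i) (fst (L!i)) (snd (L!i))"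
proof (induction x L arbitrary: i rule: valid_run.induct)
  case (2 x G y L)
  then show ?case by (cases i) auto
qed auto

lemma final_last: "final x L = last (x # map snd L)"
  by (induction x L rule: final.induct) auto

lemma energy_sum: "energy x L = (\<Sum>i<length L. ellG (fst (L!i)) ((x # map snd L)!i))"
proof (induction x L rule: energy.induct)
  case (2 x G y L)
  then show ?case by (simp add: sum.lessThan_Suc_shift del: sum.lessThan_Suc)
qed auto

lemma vstep_idle: "\<forall>i\<in>{1..n}. x i \<in> {0..1} \<Longrightarrow> vstep x idleG x"
proof -
  assume h: "\<forall>i\<in>{1..n}. x i \<in> {0..1}"
  have "\<And>i. i \<in> {1..n} \<Longrightarrow> nbr x idleG i = {x i}" unfolding nbr_def idleG_def by auto
  thus ?thesis using h unfolding vstep_def by (auto simp: idleG_def)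
qed

lemma assemble:
  assumes "0 < \<rho>" "\<rho> \<le> 1/2" "valid_run x0 L" "\<forall>i\<in>{1..n}. final x0 L i \<in> {0..1}"
  shows "averaging_system n \<rho> (gsys L) (xsys x0 L) \<and> s_energy n (gsys L) (xsys x0 L) s \<ge> ennreal (energy x0 L)"
proof
  have vs: "vstep (xsys x0 L t) (gsys L t) (xsys x0 L (Suc t))" if "t \<ge> 1" for t
  proof (cases "t \<le> length L")
    case True
    have "vstep ((x0 # map snd L)!(t-1)) (fst (L!(t-1))) (snd (L!(t-1)))"
      using vrun_nth[OF assms(3)] True that by auto
    moreover have "(x0 # map snd L)!t = snd (L!(t-1))" using True that
      by (cases t) auto
    ultimately show ?thesis using True that unfolding xsys_def gsys_def by auto
  next
    case False
    have "xsys x0 L t = final x0 L" "xsys x0 L (Suc t) = final x0 L" "gsys L t = idleG"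
      using that False unfolding xsys_def gsys_def
      by (cases "t = Suc (length L)"; auto simp: final_last last_conv_nth)+
    thus ?thesis using vstep_idle assms(4) by simp
  qed
  show "averaging_system n \<rho> (gsys L) (xsys x0 L)"
    unfolding averaging_system_def Lpos_def Rpos_def using assms(1,2) vs
    unfolding vstep_def nbr_def by blast
  have "energy x0 L = (\<Sum>t<length L. ell n (gsys L) (xsys x0 L) s (Suc t))"
    unfolding energy_sum ell_def seg_union_def ellG_def gsys_def xsys_def
    by (intro sum.cong) auto
  then have "ennreal (energy x0 L) = (\<Sum>t<length L. ennreal (ell n (gsys L) (xsys x0 L) s (Suc t)))"
  proof -
    assume e: ?this
    show ?thesis unfolding e
      by (rule sum_ennreal[symmetric]) (auto simp: ell_def intro!: sum_nonneg)
  qed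
  also have "\<dots> \<le> s_energy n (gsys L) (xsys x0 L) s" unfolding s_energy_def
    by (intro sum_le_suminf summableI) auto
  finally show "s_energy n (gsys L) (xsys x0 L) s \<ge> ennreal (energy x0 L)" .
qed

end



context
  fixes n :: nat and \<rho> :: real and s :: real and m :: nat
begin

definition pairG :: "nat \<Rightarrow> nat \<Rightarrow> nat \<Rightarrow> nat \<Rightarrow> bool" where
  "pairG a b i j = ((i \<in> {1..n} \<and> i = j) \<or> (i = a \<and> j = b) \<or> (i = b \<and> j = a))"

definition cliqueG :: "nat \<Rightarrow> nat \<Rightarrow> nat \<Rightarrow> bool" where
  "cliqueG a i j = ((i \<in> {1..n} \<and> i = j) \<or> (a \<le> i \<and> i \<le> n \<and> a \<le> j \<and> j \<le> n))"

fun rounds :: "(nat \<Rightarrow> real \<Rightarrow> real \<Rightarrow> (nat\<Rightarrow>real) \<Rightarrow> stp list) \<Rightarrow> nat \<Rightarrow> nat \<Rightarrow> real \<Rightarrow> real \<Rightarrow> (nat\<Rightarrow>real) \<Rightarrow> stp list" where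
  "rounds sub 0 a c D x = []"
| "rounds sub (Suc j) a c D x = (let y = x(a := c+(1-\<rho>)*D, Suc a := c+\<rho>*D); L = sub (Suc a) c (\<rho>*D) y; z = final y L
     in (pairG a (Suc a), y) # L @ rounds sub j a (z (Suc a)) (c + (1-\<rho>)*D - z (Suc a)) z)"

primrec run :: "nat \<Rightarrow> nat \<Rightarrow> real \<Rightarrow> real \<Rightarrow> (nat\<Rightarrow>real) \<Rightarrow> stp list" where
  "run 0 a c D x = []"
| "run (Suc k) a c D x = (let L = rounds (run k) m a c D x; z = final x L; p = (z a + z (Suc a))/2
     in L @ [(cliqueG a, \<lambda>i. if a \<le> i \<and> i \<le> n then p else z i)])"

primrec E :: "nat \<Rightarrow> real" where
  "E 0 = 0"
| "E (Suc k) = (\<Sum>i<m. ((1-2*\<rho>) powr s)^i) * (1 + \<rho> powr s * E k)"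

definition pre :: "nat \<Rightarrow> real \<Rightarrow> real \<Rightarrow> (nat\<Rightarrow>real) \<Rightarrow> bool" where
  "pre a c D x = (1 \<le> a \<and> a \<le> n \<and> 0 < D \<and> 0 \<le> c \<and> c + D \<le> 1 \<and> x a = c + D \<and>
     (\<forall>i. a < i \<and> i \<le> n \<longrightarrow> x i = c) \<and> (\<forall>i\<in>{1..n}. x i \<in> {0..1}))"

end

context
  fixes n :: nat and \<rho> :: real and s :: real and m :: nat
  assumes rho0: "0 < \<rho>" and rho1: "\<rho> \<le> 1/3" and s0: "0 \<le> s"
begin

lemma MinMax2:
  assumes "c < d" shows "Min {c, d} = c" "Max {c, d} = d"
  using assms by auto

lemma pair_step:
  assumes pre: "pre n a c D x" and an: "Suc a \<le> n"
    and y: "y = x(a := c+(1-\<rho>)*D, Suc a := c+\<rho>*D)"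
  shows "vstep n \<rho> x (pairG n a (Suc a)) y" "ellG n s (pairG n a (Suc a)) x \<ge> D powr s"
proof -
  have P: "1 \<le> a" "0 < D" "x a = c + D" "x (Suc a) = c" "\<forall>i\<in>{1..n}. x i \<in> {0..1}"
    using pre an unfolding pre_def by auto
  have nb: "nbr n x (pairG n a (Suc a)) i = (if i = a \<or> i = Suc a then {c, c+D} else {x i})"
    if "i \<in> {1..n}" for i
  proof -
    have e: "nbr n x (pairG n a (Suc a)) i = x ` {j. j \<in> {1..n} \<and> pairG n a (Suc a) i j}"
      unfolding nbr_def by auto
    have "{j. j \<in> {1..n} \<and> pairG n a (Suc a) i j} = (if i = a \<or> i = Suc a then {a, Suc a} else {i})"
      using that P(1) an unfolding pairG_def by auto
    thus ?thesis unfolding e using P(3,4) by auto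
  qed
  show "vstep n \<rho> x (pairG n a (Suc a)) y"
    unfolding vstep_def
  proof (intro conjI ballI allI impI)
    fix i assume i: "i \<in> {1..n}"
    show "Min (nbr n x (pairG n a (Suc a)) i) + \<rho> * (Max (nbr n x (pairG n a (Suc a)) i) - Min (nbr n x (pairG n a (Suc a)) i)) \<le> y i" (is ?A)
      and "y i \<le> Max (nbr n x (pairG n a (Suc a)) i) - \<rho> * (Max (nbr n x (pairG n a (Suc a)) i) - Min (nbr n x (pairG n a (Suc a)) i))" (is ?B)
    proof -
      have rD: "\<rho>*D \<le> D/3" "0 \<le> \<rho>*D" using rho0 rho1 P(2) by (auto intro: mult_right_mono)
      have "?A \<and> ?B"
      proof (cases "i = a \<or> i = Suc a")
        case True
        hence N: "nbr n x (pairG n a (Suc a)) i = {c, c+D}" using nb[OF i] by simp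
        have "Min {c, c+D} = c" "Max {c, c+D} = c+D" using P(2) by (auto intro: MinMax2)
        moreover have "y i = c+(1-\<rho>)*D \<or> y i = c + \<rho>*D" using True y an by auto
        ultimately show "?A \<and> ?B" unfolding N using rD by (auto simp: algebra_simps)
      next
        case False
        hence N: "nbr n x (pairG n a (Suc a)) i = {x i}" using nb[OF i] by simp
        have "y i = x i" using False y by auto
        then show "?A \<and> ?B" unfolding N by auto
      qed
      thus ?A ?B by auto
    qed
  qed (use P an in \<open>auto simp: pairG_def\<close>)
  have "ellG n s (pairG n a (Suc a)) x \<ge> \<bar>x a - x (Suc a)\<bar> powr s"
    by (rule ellG_lower) (use s0 P an in \<open>auto simp: pairG_def\<close>)
  thus "ellG n s (pairG n a (Suc a)) x \<ge> D powr s" using P by simp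
qed

lemma clique_step:
  assumes pre: "pre n a c D z" and an: "Suc a \<le> n"
    and y: "y = (\<lambda>i. if a \<le> i \<and> i \<le> n then (z a + z (Suc a))/2 else z i)"
  shows "vstep n \<rho> z (cliqueG n a) y"
proof -
  have P: "1 \<le> a" "0 < D" "z a = c + D" "z (Suc a) = c" "\<forall>i\<in>{1..n}. z i \<in> {0..1}"
     "\<forall>i. a < i \<and> i \<le> n \<longrightarrow> z i = c"
    using pre an unfolding pre_def by auto
  have nb: "nbr n z (cliqueG n a) i = (if a \<le> i \<and> i \<le> n then {c, c+D} else {z i})"
    if "i \<in> {1..n}" for i
  proof (cases "a \<le> i \<and> i \<le> n")
    case True
    have "nbr n z (cliqueG n a) i = z ` {a..n}" using that True P(1)
      unfolding nbr_def cliqueG_def by auto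
    also have "\<dots> = {c, c+D}"
    proof
      show "z ` {a..n} \<subseteq> {c, c + D}"
      proof
        fix v assume "v \<in> z ` {a..n}"
        then obtain i where i: "i \<in> {a..n}" "v = z i" by blast
        show "v \<in> {c, c+D}"
        proof (cases "i = a")
          case True thus ?thesis using i P(3) by simp
        next
          case False thus ?thesis using i P(6) by simp
        qed
      qed
      have "c \<in> z ` {a..n}" using P(4) an by (metis atLeastAtMost_iff image_eqI le_SucI order_refl)
      moreover have "c + D \<in> z ` {a..n}" using P(3) an by (metis atLeastAtMost_iff image_eqI le_SucI le_SucE order_refl Suc_leD)
      ultimately show "{c, c + D} \<subseteq> z ` {a..n}" by blast
    qed
    finally show ?thesis using True by simp
  next
    case False
    then show ?thesis using that unfolding nbr_def cliqueG_def by auto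
  qed
  show ?thesis
    unfolding vstep_def
  proof (intro conjI ballI allI impI)
    fix i assume i: "i \<in> {1..n}"
    show "Min (nbr n z (cliqueG n a) i) + \<rho> * (Max (nbr n z (cliqueG n a) i) - Min (nbr n z (cliqueG n a) i)) \<le> y i" (is ?A)
      and "y i \<le> Max (nbr n z (cliqueG n a) i) - \<rho> * (Max (nbr n z (cliqueG n a) i) - Min (nbr n z (cliqueG n a) i))" (is ?B)
    proof -
      have rD: "\<rho>*D \<le> D/3" "0 \<le> \<rho>*D" using rho0 rho1 P(2) by (auto intro: mult_right_mono)
      have "?A \<and> ?B"
      proof (cases "a \<le> i \<and> i \<le> n")
        case True
        hence N: "nbr n z (cliqueG n a) i = {c, c+D}" using nb[OF i] by simp
        have "Min {c, c+D} = c" "Max {c, c+D} = c+D" using P(2) by (auto intro: MinMax2)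
        moreover have "y i = c + D/2" using True y P by auto
        ultimately show "?A \<and> ?B" unfolding N using rD by (auto simp: algebra_simps)
      next
        case False
        have N: "nbr n z (cliqueG n a) i = {z i}" unfolding nb[OF i] if_not_P[OF False] ..
        have "y i = z i" using False y by auto
        then show "?A \<and> ?B" unfolding N by auto
      qed
      thus ?A ?B by auto
    qed
  qed (use P an in \<open>auto simp: cliqueG_def\<close>)
qed


lemma E_nonneg: "E \<rho> s m k \<ge> 0"
  by (induction k) (auto intro!: sum_nonneg mult_nonneg_nonneg add_nonneg_nonneg)

lemma rounds_lemma:
  fixes k :: nat
  defines "r \<equiv> (1-2*\<rho>) powr s"
  assumes Pk: "\<And>a c D x. n - a = k \<Longrightarrow> pre n a c D x \<Longrightarrow>
      valid_run n \<rho> x (run n \<rho> m k a c D x) \<and>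
      (\<exists>p. c \<le> p \<and> p \<le> c+D \<and> (\<forall>i. a \<le> i \<and> i \<le> n \<longrightarrow> final x (run n \<rho> m k a c D x) i = p)) \<and>
      (\<forall>i. \<not>(a \<le> i \<and> i \<le> n) \<longrightarrow> final x (run n \<rho> m k a c D x) i = x i) \<and>
      energy n s x (run n \<rho> m k a c D x) \<ge> D powr s * E \<rho> s m k"
  shows "n - a = Suc k \<Longrightarrow> pre n a c D x \<Longrightarrow>
      valid_run n \<rho> x (rounds n \<rho> (run n \<rho> m k) j a c D x) \<and>
      (\<forall>i. \<not>(a \<le> i \<and> i \<le> n) \<longrightarrow> final x (rounds n \<rho> (run n \<rho> m k) j a c D x) i = x i) \<and>
      (\<exists>c' D'. pre n a c' D' (final x (rounds n \<rho> (run n \<rho> m k) j a c D x)) \<and> c \<le> c' \<and> c' + D' \<le> c + D \<and>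
          D' powr s \<ge> r^j * D powr s) \<and>
      energy n s x (rounds n \<rho> (run n \<rho> m k) j a c D x) \<ge> (\<Sum>i<j. r^i) * D powr s * (1 + \<rho> powr s * E \<rho> s m k)"
proof (induction j arbitrary: c D x)
  case 0
  then show ?case by auto
next
  case (Suc j)
  note na = Suc.prems(1) and pr = Suc.prems(2)
  have P: "1 \<le> a" "Suc a \<le> n" "0 < D" "0 \<le> c" "c + D \<le> 1" "x a = c + D"
     "\<forall>i. a < i \<and> i \<le> n \<longrightarrow> x i = c" "\<forall>i\<in>{1..n}. x i \<in> {0..1}"
    using pr na unfolding pre_def by auto
  define F where "F = 1 + \<rho> powr s * E \<rho> s m k"
  have F0: "F \<ge> 0" unfolding F_def using E_nonneg by auto
  have r0: "r \<ge> 0" unfolding r_def by simp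
  have rD: "\<rho>*D \<le> D/3" "0 < \<rho>*D" using rho0 rho1 P(3) by (auto intro: mult_right_mono)
  have cr: "c + \<rho>*D \<le> 1" using rD P by linarith
  have "(1-\<rho>)*D = D - \<rho>*D" by (simp add: algebra_simps)
  hence cr2: "c + (1-\<rho>)*D \<le> 1" "0 \<le> c + (1-\<rho>)*D" using rD P by linarith+
  define y where "y = x(a := c+(1-\<rho>)*D, Suc a := c+\<rho>*D)"
  define L where "L = run n \<rho> m k (Suc a) c (\<rho>*D) y"
  define z where "z = final y L"
  define p where "p = z (Suc a)"
  define D1 where "D1 = c+(1-\<rho>)*D - p"
  define R where "R = rounds n \<rho> (run n \<rho> m k) j a p D1 z"
  have eq: "rounds n \<rho> (run n \<rho> m k) (Suc j) a c D x = (pairG n a (Suc a), y) # L @ R"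
    by (simp add: Let_def y_def L_def z_def p_def R_def D1_def)
  have ps: "vstep n \<rho> x (pairG n a (Suc a)) y" "ellG n s (pairG n a (Suc a)) x \<ge> D powr s"
    using pair_step[OF pr P(2) y_def] by auto
  have y01: "\<forall>i\<in>{1..n}. y i \<in> {0..1}"
  proof
    fix i assume "i \<in> {1..n}"
    thus "y i \<in> {0..1}" using P rD unfolding y_def by (auto simp: algebra_simps)
  qed
  have pre1: "pre n (Suc a) c (\<rho>*D) y"
    unfolding pre_def using P rD y01 by (auto simp: y_def)
  have nk: "n - Suc a = k" using na by auto
  from Pk[OF nk pre1] obtain q where
    vL: "valid_run n \<rho> y L" and q: "c \<le> q" "q \<le> c + \<rho>*D" "\<forall>i. Suc a \<le> i \<and> i \<le> n \<longrightarrow> z i = q"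
    and zout: "\<forall>i. \<not>(Suc a \<le> i \<and> i \<le> n) \<longrightarrow> z i = y i"
    and eL: "energy n s y L \<ge> (\<rho>*D) powr s * E \<rho> s m k"
    unfolding L_def[symmetric] z_def[symmetric] by blast
  have pq: "p = q" unfolding p_def using q(3) P(2) by auto
  have D1ge: "D1 \<ge> (1-2*\<rho>)*D" unfolding D1_def using q(2) pq by (auto simp: algebra_simps)
  have "(1-2*\<rho>)*D = D - 2*(\<rho>*D)" by (simp add: algebra_simps)
  hence D1pos: "D1 > 0" using D1ge rD P(3) by linarith
  have za: "z a = c+(1-\<rho>)*D" using zout y_def by auto
  have pre2: "pre n a p D1 z"
    unfolding pre_def
  proof (intro conjI allI impI ballI)
    fix i assume "a < i \<and> i \<le> n" thus "z i = p" using q(3) pq by auto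
  next
    fix i assume i: "i \<in> {1..n}"
    show "z i \<in> {0..1}"
    proof (cases "Suc a \<le> i \<and> i \<le> n")
      case True thus ?thesis using q pq cr P by auto
    next
      case False thus ?thesis using zout y01 i by auto
    qed
  qed (use P D1pos q pq za rD cr2 in \<open>auto simp: D1_def\<close>)
  from Suc.IH[OF na pre2] obtain c' D' where
    vR: "valid_run n \<rho> z R" and Rout: "\<forall>i. \<not>(a \<le> i \<and> i \<le> n) \<longrightarrow> final z R i = z i"
    and c'D': "pre n a c' D' (final z R)" "p \<le> c'" "c' + D' \<le> p + D1" "D' powr s \<ge> r^j * D1 powr s"
    and eR: "energy n s z R \<ge> (\<Sum>i<j. r^i) * D1 powr s * F"
    unfolding R_def[symmetric] F_def by blast
  have D1s: "D1 powr s \<ge> r * D powr s"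
  proof -
    have "r * D powr s = ((1-2*\<rho>)*D) powr s" unfolding r_def using rho1 P(3)
      by (simp add: powr_mult)
    also have "\<dots> \<le> D1 powr s" using D1ge rho1 P(3) s0 by (intro powr_mono2) auto
    finally show ?thesis .
  qed
  have fin: "final x (rounds n \<rho> (run n \<rho> m k) (Suc j) a c D x) = final z R"
    unfolding eq by (simp add: z_def)
  have S0: "(\<Sum>i<j. r^i) \<ge> 0" using r0 by (auto intro: sum_nonneg)
  have en: "energy n s x (rounds n \<rho> (run n \<rho> m k) (Suc j) a c D x) =
      ellG n s (pairG n a (Suc a)) x + energy n s y L + energy n s z R"
    unfolding eq by (simp add: z_def)
  have "(\<Sum>i<Suc j. r^i) * D powr s * F = D powr s * F + r * (\<Sum>i<j. r^i) * D powr s * F"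
    by (simp add: sum.lessThan_Suc_shift sum_distrib_left algebra_simps del: sum.lessThan_Suc)
  also have "\<dots> = D powr s + (\<rho>*D) powr s * E \<rho> s m k + (\<Sum>i<j. r^i) * (r * D powr s) * F"
    unfolding F_def using rho0 P(3) by (simp add: powr_mult algebra_simps)
  also have "\<dots> \<le> D powr s + (\<rho>*D) powr s * E \<rho> s m k + (\<Sum>i<j. r^i) * D1 powr s * F"
    using D1s S0 F0 by (intro add_left_mono mult_right_mono mult_left_mono) auto
  also have "\<dots> \<le> energy n s x (rounds n \<rho> (run n \<rho> m k) (Suc j) a c D x)"
    unfolding en using ps(2) eL eR by linarith
  finally have E1: "energy n s x (rounds n \<rho> (run n \<rho> m k) (Suc j) a c D x) \<ge> (\<Sum>i<Suc j. r^i) * D powr s * F" .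
  have "r^(Suc j) * D powr s = r^j * (r * D powr s)" by simp
  also have "\<dots> \<le> r^j * D1 powr s" using D1s r0 by (intro mult_left_mono) auto
  also have "\<dots> \<le> D' powr s" using c'D'(4) .
  finally have D's: "r^(Suc j) * D powr s \<le> D' powr s" .
  show ?case
  proof (intro conjI)
    show "valid_run n \<rho> x (rounds n \<rho> (run n \<rho> m k) (Suc j) a c D x)"
      unfolding eq using ps(1) vL vR by (simp add: z_def)
    show "\<forall>i. \<not>(a \<le> i \<and> i \<le> n) \<longrightarrow> final x (rounds n \<rho> (run n \<rho> m k) (Suc j) a c D x) i = x i"
      unfolding fin
    proof (intro allI impI)
      fix i assume i: "\<not>(a \<le> i \<and> i \<le> n)"
      hence "i \<noteq> a" "i \<noteq> Suc a" using P(2) by auto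
      thus "final z R i = x i" using Rout zout i unfolding y_def by auto
    qed
    show "\<exists>c' D'. pre n a c' D' (final x (rounds n \<rho> (run n \<rho> m k) (Suc j) a c D x)) \<and> c \<le> c' \<and> c' + D' \<le> c + D \<and>
          D' powr s \<ge> r^(Suc j) * D powr s"
    proof -
      have "c \<le> c'" using q pq c'D'(2) by linarith
      moreover have "c' + D' \<le> c + D" using c'D'(3) cr2 rD unfolding D1_def by (simp add: algebra_simps)
      ultimately show ?thesis unfolding fin using c'D'(1) D's by blast
    qed
    show "energy n s x (rounds n \<rho> (run n \<rho> m k) (Suc j) a c D x) \<ge> (\<Sum>i<Suc j. r^i) * D powr s * (1 + \<rho> powr s * E \<rho> s m k)"
      using E1 unfolding F_def .
  qed
qed


lemma run_lemma:
  "n - a = k \<Longrightarrow> pre n a c D x \<Longrightarrow>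
      valid_run n \<rho> x (run n \<rho> m k a c D x) \<and>
      (\<exists>p. c \<le> p \<and> p \<le> c+D \<and> (\<forall>i. a \<le> i \<and> i \<le> n \<longrightarrow> final x (run n \<rho> m k a c D x) i = p)) \<and>
      (\<forall>i. \<not>(a \<le> i \<and> i \<le> n) \<longrightarrow> final x (run n \<rho> m k a c D x) i = x i) \<and>
      energy n s x (run n \<rho> m k a c D x) \<ge> D powr s * E \<rho> s m k"
proof (induction k arbitrary: a c D x)
  case 0
  hence "a = n" "x a = c + D" "D > 0" unfolding pre_def by auto
  then show ?case by (auto intro!: exI[of _ "c+D"])
next
  case (Suc k)
  note na = Suc.prems(1) and pr = Suc.prems(2)
  have P: "1 \<le> a" "Suc a \<le> n" "0 < D"
    using pr na unfolding pre_def by auto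
  define R where "R = rounds n \<rho> (run n \<rho> m k) m a c D x"
  define z where "z = final x R"
  define y where "y = (\<lambda>i. if a \<le> i \<and> i \<le> n then (z a + z (Suc a))/2 else z i)"
  have eq: "run n \<rho> m (Suc k) a c D x = R @ [(cliqueG n a, y)]"
    unfolding y_def z_def R_def by (simp add: Let_def)
  from rounds_lemma[OF Suc.IH na pr, of m] obtain c' D' where
    vR: "valid_run n \<rho> x R" and Rout: "\<forall>i. \<not>(a \<le> i \<and> i \<le> n) \<longrightarrow> z i = x i"
    and c'D': "pre n a c' D' z" "c \<le> c'" "c' + D' \<le> c + D"
    and eR: "energy n s x R \<ge> (\<Sum>i<m. ((1-2*\<rho>) powr s)^i) * D powr s * (1 + \<rho> powr s * E \<rho> s m k)"
    unfolding R_def[symmetric] z_def[symmetric] by blast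
  have cs: "vstep n \<rho> z (cliqueG n a) y" by (rule clique_step[OF c'D'(1) P(2) y_def])
  have zz: "z a = c' + D'" "z (Suc a) = c'" "D' > 0" using c'D'(1) P(2) unfolding pre_def by auto
  show ?case
  proof (intro conjI)
    show "valid_run n \<rho> x (run n \<rho> m (Suc k) a c D x)" unfolding eq using vR cs by (simp add: z_def)
    show "\<exists>p. c \<le> p \<and> p \<le> c + D \<and> (\<forall>i. a \<le> i \<and> i \<le> n \<longrightarrow> final x (run n \<rho> m (Suc k) a c D x) i = p)"
      unfolding eq using zz c'D' by (intro exI[of _ "(z a + z (Suc a))/2"]) (auto simp: z_def[symmetric] y_def)
    show "\<forall>i. \<not>(a \<le> i \<and> i \<le> n) \<longrightarrow> final x (run n \<rho> m (Suc k) a c D x) i = x i"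
      unfolding eq using Rout by (auto simp: z_def[symmetric] y_def)
    have "energy n s x (run n \<rho> m (Suc k) a c D x) = energy n s x R + ellG n s (cliqueG n a) z"
      unfolding eq by (simp add: z_def)
    thus "energy n s x (run n \<rho> m (Suc k) a c D x) \<ge> D powr s * E \<rho> s m (Suc k)"
      using eR ellG_nonneg[of n s "cliqueG n a" z] by (simp add: algebra_simps)
  qed
qed

end



lemma E_lower:
  fixes \<rho> s :: real and m :: nat
  assumes r0: "0 < \<rho>" "\<rho> \<le> 1/3" and s0: "0 < s" and sl: "s \<le> (1/4) / log 2 (1/\<rho>)"
    and mdef: "m = nat (floor (1/(12*\<rho>* s)))" and k: "k \<ge> 1"
  shows "E \<rho> s m k \<ge> (1/96 / (\<rho> * s))^k"
proof -
  have l1: "log 2 (1/\<rho>) \<ge> 1"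
  proof -
    have "log 2 2 \<le> log 2 (1/\<rho>)" using r0 by (intro log_mono) (auto simp: field_simps)
    thus ?thesis by simp
  qed
  have slog: "s * log 2 (1/\<rho>) \<le> 1/4" using sl l1 s0 by (simp add: field_simps)
  have "s \<le> s * log 2 (1/\<rho>)" using l1 s0 by (simp add: mult_le_cancel_left1)
  hence s4: "s \<le> 1/4" using slog by linarith
  have rs: "\<rho> * s \<le> 1/12" using mult_mono[OF r0(2) s4] r0 s0 by simp
  have rs0: "\<rho> * s > 0" using r0 s0 by simp
  have lnr: "ln \<rho> = - (log 2 (1/\<rho>) * ln 2)" unfolding log_def using r0 by (simp add: ln_div)
  have rps: "\<rho> powr s \<ge> 1/2"
  proof -
    have "s * ln \<rho> = - ((s * log 2 (1/\<rho>)) * ln 2)" unfolding lnr by (simp add: algebra_simps)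
    also have "\<dots> \<ge> - ln 2"
    proof -
      have "(s * log 2 (1/\<rho>)) * ln 2 \<le> 1 * ln 2" using slog by (intro mult_right_mono) auto
      thus ?thesis by simp
    qed
    finally have "exp (- ln 2) \<le> exp (s * ln \<rho>)" by simp
    moreover have "exp (- ln 2) = (1/2::real)" by (simp add: exp_minus)
    ultimately show ?thesis using r0 by (simp add: powr_def)
  qed
  have rps1: "\<rho> powr s \<le> 1" using r0 s0 by (intro powr_le1) auto
  define q where "q = 1 - 2*\<rho>"
  define r where "r = q powr s"
  have q0: "q \<ge> 1/3" "q < 1" using r0 unfolding q_def by auto
  have r01: "0 \<le> r" "r \<le> 1" unfolding r_def using q0 s0 by (auto intro: powr_le1)
  have lnq: "ln q \<ge> - 6*\<rho>"
  proof -
    have "ln (1/q) \<le> 1/q - 1" using q0 by (intro ln_le_minus_one) auto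
    moreover have "1/q - 1 = 2*\<rho>/q" using q0 unfolding q_def by (simp add: field_simps)
    moreover have "2*\<rho>/q \<le> 6*\<rho>" using q0 r0 by (simp add: field_simps)
    moreover have "ln (1/q) = - ln q" using q0 by (simp add: ln_div)
    ultimately show ?thesis by linarith
  qed
  define y where "y = 1/(12*\<rho>* s)"
  have y1: "y \<ge> 1" unfolding y_def using rs rs0 by (simp add: field_simps)
  have "0 \<le> floor y" using y1 by simp
  hence mreal: "real m = real_of_int (floor y)" unfolding mdef y_def[symmetric] by (simp add: of_nat_nat)
  have my: "real m \<le> y" "real m \<ge> y/2"
  proof -
    have "real_of_int (floor y) \<ge> 1" using y1 by (simp add: le_floor_iff)
    thus "real m \<le> y" "real m \<ge> y/2" using mreal real_of_int_floor_ge_diff_one[of y] of_int_floor_le[of y] by linarith+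
  qed
  have rm: "r^m \<ge> 1/2"
  proof -
    have "r^m = q powr (real m * s)" unfolding r_def using q0 by (simp add: powr_power)
    also have "\<dots> = exp ((real m * s) * ln q)" using q0 by (simp add: powr_def)
    finally have e: "r^m = exp ((real m * s) * ln q)" .
    have "(real m * s) * ln q \<ge> (real m * s) * (- 6*\<rho>)" using lnq s0 by (intro mult_left_mono) auto
    moreover have "(real m * s) * (- 6*\<rho>) \<ge> - 1/2"
    proof -
      have "real m * (\<rho> * s) \<le> y * (\<rho> * s)" using my rs0 by (intro mult_right_mono) auto
      also have "\<dots> = 1/12" unfolding y_def using r0 s0 by (simp add: field_simps)
      finally show ?thesis by (simp add: algebra_simps)
    qed
    ultimately have "exp (-1/2) \<le> r^m" unfolding e by simp
    moreover have "exp (-1/2) \<ge> (1/2::real)"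
    proof -
      have "exp (1/2::real) * exp (1/2) = exp 1" by (simp flip: exp_add)
      hence "exp (1/2::real) * exp (1/2) \<le> 2 * 2" using exp_le by simp
      hence "exp (1/2::real) \<le> 2"
      proof -
        assume h: "exp (1/2::real) * exp (1/2) \<le> 2 * 2"
        show ?thesis
        proof (rule ccontr)
          assume "\<not> exp (1/2::real) \<le> 2"
          hence "2 * 2 < exp (1/2::real) * exp (1/2)" by (intro mult_strict_mono) auto
          thus False using h by linarith
        qed
      qed
      thus ?thesis by (simp add: exp_minus field_simps)
    qed
    ultimately show ?thesis by linarith
  qed
  define S where "S = (\<Sum>i<m. r^i)"
  have S: "S \<ge> real m / 2"
  proof -
    have "real (card {..<m}) * (1/2) \<le> S" unfolding S_def
    proof (rule sum_bounded_below)
      fix i assume "i \<in> {..<m}"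
      hence "r^m \<le> r^i" using r01 by (intro power_decreasing) auto
      thus "1/2 \<le> r^i" using rm by linarith
    qed
    thus ?thesis by simp
  qed
  have Sr: "S * \<rho> powr s \<ge> 1/96 / (\<rho> * s)"
  proof -
    have "1/96/(\<rho>* s) = (y/2)/2/2" unfolding y_def using r0 s0 by (simp add: field_simps)
    also have "\<dots> \<le> (real m/2) * (1/2)" using my by simp
    also have "\<dots> \<le> S * \<rho> powr s" using S rps my y1 by (intro mult_mono) auto
    finally show ?thesis .
  qed
  have ES: "E \<rho> s m (Suc k) = S * (1 + \<rho> powr s * E \<rho> s m k)" for k
    unfolding S_def r_def q_def by simp
  have S0: "S \<ge> 0" using S by simp
  have main: "E \<rho> s m k \<ge> (S * \<rho> powr s)^k" if "k \<ge> 1" for k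
    using that
  proof (induction k rule: dec_induct)
    case base
    show ?case using ES[of 0] S0 rps1 by (simp add: mult_left_le)
  next
    case (step k)
    have "(S * \<rho> powr s)^(Suc k) = (S * \<rho> powr s) * (S * \<rho> powr s)^k" by simp
    also have "\<dots> \<le> (S * \<rho> powr s) * E \<rho> s m k" using step.IH S0 by (intro mult_left_mono) auto
    also have "\<dots> \<le> S * (1 + \<rho> powr s * E \<rho> s m k)" using S0 by (simp add: algebra_simps)
    finally show ?case unfolding ES .
  qed
  have "(1/96 / (\<rho> * s))^k \<le> (S * \<rho> powr s)^k" using Sr rs0 by (intro power_mono) auto
  thus ?thesis using main[OF k] by linarith
qed





theorem mainTheorem7:
  shows "\<exists>c1 c2 :: real. c1 > 0 \<and> c2 > 0 \<and>
    (\<forall>n::nat. \<forall>\<rho>::real. \<forall>s::real.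
       n \<ge> 2 \<longrightarrow> 0 < \<rho> \<longrightarrow> \<rho> \<le> 1/3 \<longrightarrow> 0 < s \<longrightarrow> s \<le> c1 / log 2 (1/\<rho>) \<longrightarrow>
       (\<exists>g x. averaging_system n \<rho> g x \<and>
          s_energy n g x s \<ge> ennreal ((c2 / (\<rho> * s)) ^ (n - 1))))"
proof (rule exI[of _ "1/4::real"], rule exI[of _ "1/96::real"], intro conjI allI impI)
  fix n :: nat and \<rho> s :: real
  assume n2: "n \<ge> 2" and r0: "0 < \<rho>" and r1: "\<rho> \<le> 1/3" and s0: "0 < s" and sl: "s \<le> (1/4) / log 2 (1/\<rho>)"
  define m where "m = nat (floor (1/(12 * \<rho> * s)))"
  define x0 :: "nat \<Rightarrow> real" where "x0 = (\<lambda>i. if i = 1 then 1 else 0)"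
  define L where "L = run n \<rho> m (n-1) 1 0 1 x0"
  have pre: "pre n 1 0 1 x0" unfolding pre_def x0_def using n2 by auto
  have R: "valid_run n \<rho> x0 L \<and>
      (\<exists>p. 0 \<le> p \<and> p \<le> 0+1 \<and> (\<forall>i. 1 \<le> i \<and> i \<le> n \<longrightarrow> final x0 L i = p)) \<and>
      (\<forall>i. \<not>(1 \<le> i \<and> i \<le> n) \<longrightarrow> final x0 L i = x0 i) \<and>
      energy n s x0 L \<ge> 1 powr s * E \<rho> s m (n-1)"
    unfolding L_def by (rule run_lemma[OF r0 r1 _ _ pre]) (use s0 in auto)
  have f01: "\<forall>i\<in>{1..n}. final x0 L i \<in> {0..1}" using R by auto
  have A: "averaging_system n \<rho> (gsys n L) (xsys x0 L) \<and> s_energy n (gsys n L) (xsys x0 L) s \<ge> ennreal (energy n s x0 L)"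
    by (rule assemble) (use r0 r1 R f01 in auto)
  have "E \<rho> s m (n-1) \<ge> (1/96 / (\<rho> * s))^(n-1)"
    by (rule E_lower[OF r0 r1 s0 sl m_def]) (use n2 in auto)
  hence "energy n s x0 L \<ge> (1/96 / (\<rho> * s))^(n-1)" using R by simp
  hence "ennreal ((1/96 / (\<rho> * s))^(n-1)) \<le> s_energy n (gsys n L) (xsys x0 L) s"
    using A by (meson ennreal_leI order_trans)
  thus "\<exists>g x. averaging_system n \<rho> g x \<and> s_energy n g x s \<ge> ennreal ((1/96 / (\<rho> * s)) ^ (n - 1))"
    using A by blast
qed auto


end
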